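(* Let $X$ be a completely regular space and let $\mathcal B\subset\Sigma_X$ be a base for $X$ consisting of co-zero sets. If the family $\{\mathcal P\in[\mathcal B]^{\le\omega}:\mathcal P\subset_!\mathcal B\}$ contains a club, then the family $\{\mathcal P\in[\Sigma_X]^{\le\omega}:\mathcal P\subset_!\Sigma_X\}$ contains a club too.
   Context: $\Sigma_X$ denotes the collection of all co-zero sets of $X$ (sets of the form $f^{-1}((0,1])$ for continuous $f\colon X\to[0,1]$). For a family $\mathcal P$ of open subsets of $X$ contained in a family $\mathcal Q$ of open subsets of $X$, write $\mathcal P\subset_!\mathcal Q$ if for every subfamily $\mathcal S\subset\mathcal P$ and every point $x\notin\operatorname{cl}_X\bigcup\mathcal S$ there exists $W\in\mathcal P$ with $x\in W$ and $W\cap\bigcup\mathcal S=\emptyset$. $[\mathcal Q]^{\le\omega}$ denotes the set of all countable subfamilies of $\mathcal Q$. A family $\mathcal C\subset[\mathcal Q]^{\le\omega}$ is a club if (i) for every increasing sequence $C_1\subset C_2\subset\cdots$ of members of $\mathcal C$, $\bigcup_nC_n\in\mathcal C$, and (ii) every $B\in[\mathcal Q]^{\le\omega}$ is contained in some $C\in\mathcal C$. *)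

theory Defs
  imports "HOL-Analysis.Analysis"
begin

definition cozero_sets :: "'a topology \<Rightarrow> 'a set set" where
  "cozero_sets X = {{x \<in> topspace X. f x \<in> {0<..1}} | f.
       continuous_map X (top_of_set {0..1::real}) f}"

definition is_base :: "'a topology \<Rightarrow> 'a set set \<Rightarrow> bool" where
  "is_base X B \<longleftrightarrow> (\<forall>U\<in>B. openin X U) \<and>
     (\<forall>U. openin X U \<longrightarrow> (\<exists>S\<subseteq>B. \<Union>S = U))"

definition subfam_excl :: "'a topology \<Rightarrow> 'a set set \<Rightarrow> 'a set set \<Rightarrow> bool" where
  "subfam_excl X P Q \<longleftrightarrow> P \<subseteq> Q \<and> (\<forall>U\<in>Q. openin X U) \<and>
     (\<forall>S\<subseteq>P. \<forall>x\<in>topspace X. x \<notin> X closure_of (\<Union>S) \<longrightarrow>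
        (\<exists>W\<in>P. x \<in> W \<and> W \<inter> \<Union>S = {}))"

definition countable_subfams :: "'b set \<Rightarrow> 'b set set" where
  "countable_subfams Q = {P. P \<subseteq> Q \<and> countable P}"

definition is_club :: "'b set \<Rightarrow> 'b set set \<Rightarrow> bool" where
  "is_club Q C \<longleftrightarrow> C \<subseteq> countable_subfams Q \<and>
     (\<forall>F::nat \<Rightarrow> 'b set. (\<forall>n. F n \<in> C) \<and> incseq F \<longrightarrow> (\<Union>n. F n) \<in> C) \<and>
     (\<forall>B\<in>countable_subfams Q. \<exists>D\<in>C. B \<subseteq> D)"

end

theory Submission
  imports Defs
begin

lemma cozero_open:
  assumes "U \<in> cozero_sets X" shows "openin X U"
proof -
  obtain f where U: "U = {x \<in> topspace X. f x \<in> {0<..1}}"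
    and f: "continuous_map X (top_of_set {0..1::real}) f"
    using assms unfolding cozero_sets_def by blast
  have "openin (top_of_set {0..1::real}) {0<..1}"
  proof -
    have "{0<..1::real} = {0..1} \<inter> {0<..}" by auto
    then show ?thesis by (metis openin_open_Int open_greaterThan)
  qed
  then show ?thesis using U f openin_continuous_map_preimage by blast
qed

lemma excl_main:
  assumes D: "subfam_excl X D B" and DP: "D \<subseteq> P" and PQ: "P \<subseteq> Q"
    and Qo: "\<forall>U\<in>Q. openin X U"
    and cl: "\<forall>U\<in>P. \<forall>V\<in>D. \<not> V \<subseteq> X closure_of U \<longrightarrow>
                (\<exists>W\<in>D. W \<noteq> {} \<and> W \<subseteq> V - X closure_of U)"
  shows "subfam_excl X P Q"
  unfolding subfam_excl_def
proof (intro conjI PQ Qo allI impI ballI)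
  have DB: "D \<subseteq> B" and Bo: "\<forall>U\<in>B. openin X U"
    and Dx: "\<And>S x. S \<subseteq> D \<Longrightarrow> x \<in> topspace X \<Longrightarrow> x \<notin> X closure_of \<Union>S
              \<Longrightarrow> \<exists>W\<in>D. x \<in> W \<and> W \<inter> \<Union>S = {}"
    using D unfolding subfam_excl_def by blast+
  fix S x assume SP: "S \<subseteq> P" and x: "x \<in> topspace X" and xn: "x \<notin> X closure_of \<Union>S"
  define S' where "S' = {V\<in>D. V \<subseteq> X closure_of \<Union>S}"
  have sub: "\<Union>S \<subseteq> \<Union>S'"
  proof
    fix y assume "y \<in> \<Union>S"
    then obtain U where U: "U \<in> S" "y \<in> U" by blast
    have Uo: "openin X U" using U SP PQ Qo by blast
    define T where "T = {W\<in>D. W \<inter> U = {}}"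
    have "U \<inter> \<Union>T = {}" unfolding T_def by blast
    hence "U \<inter> X closure_of \<Union>T = {}" using openin_Int_closure_of_eq_empty[OF Uo] by blast
    hence yT: "y \<notin> X closure_of \<Union>T" using U by blast
    have yt: "y \<in> topspace X" using Uo U openin_subset by blast
    obtain V where V: "V \<in> D" "y \<in> V" "V \<inter> \<Union>T = {}"
      using Dx[of T y] yT yt unfolding T_def by blast
    have "V \<subseteq> X closure_of U"
    proof (rule ccontr)
      assume nv: "\<not> V \<subseteq> X closure_of U"
      have UP: "U \<in> P" using U SP by blast
      obtain W where W: "W \<in> D" "W \<noteq> {}" "W \<subseteq> V - X closure_of U"
        using cl[rule_format, OF UP V(1) nv] by blast
      have "U \<subseteq> X closure_of U" by (rule closure_of_subset[OF openin_subset[OF Uo]])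
      hence "W \<inter> U = {}" using W(3) by blast
      hence WT: "W \<in> T" using W(1) unfolding T_def by blast
      obtain w where w: "w \<in> W" using W(2) by blast
      have "w \<in> V" using w W(3) by (rule rev_subsetD[THEN DiffD1])
      moreover have "w \<in> \<Union>T" using w WT by (rule UnionI[rotated])
      ultimately show False using V(3) by (simp add: disjoint_iff)
    qed
    moreover have "X closure_of U \<subseteq> X closure_of \<Union>S" by (rule closure_of_mono[OF Union_upper[OF U(1)]])
    ultimately have "V \<subseteq> X closure_of \<Union>S" by (rule order_trans)
    hence "V \<in> S'" using V(1) unfolding S'_def by simp
    thus "y \<in> \<Union>S'" using V by blast
  qed
  have "X closure_of \<Union>S' \<subseteq> X closure_of \<Union>S"
    by (rule closure_of_minimal) (auto simp: S'_def)
  hence "x \<notin> X closure_of \<Union>S'" using xn by blast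
  then obtain W where W: "W \<in> D" "x \<in> W" "W \<inter> \<Union>S' = {}"
    using Dx[of S' x] x unfolding S'_def by blast
  have "openin X W" using W DB Bo by blast
  hence "W \<inter> X closure_of \<Union>S' = {}" using openin_Int_closure_of_eq_empty W by blast
  moreover have "\<Union>S \<subseteq> X closure_of \<Union>S'"
    using sub closure_of_subset_Int[of X "\<Union>S'"] SP PQ Qo openin_subset by blast
  ultimately have WS: "W \<inter> \<Union>S = {}" by (metis Int_mono order_refl subset_empty)
  have WP: "W \<in> P" using DP W(1) by (rule subsetD)
  show "\<exists>W\<in>P. x \<in> W \<and> W \<inter> \<Union>S = {}" using WP W(2) WS by (intro bexI[of _ W] conjI)
qed

lemma club_D1: "is_club Q C \<Longrightarrow> C \<subseteq> countable_subfams Q"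
  unfolding is_club_def by simp

lemma club_D2: "is_club Q C \<Longrightarrow> (\<And>n. F n \<in> C) \<Longrightarrow> incseq F \<Longrightarrow> (\<Union>n. F n) \<in> C"
  unfolding is_club_def by simp

lemma club_D3: "is_club Q C \<Longrightarrow> B \<in> countable_subfams Q \<Longrightarrow> \<exists>D\<in>C. B \<subseteq> D"
  unfolding is_club_def by simp

lemma base_wit:
  assumes "is_base X B" "V \<in> B" "\<not> V \<subseteq> X closure_of U"
  shows "\<exists>W. W \<in> B \<and> W \<noteq> {} \<and> W \<subseteq> V - X closure_of U"
proof -
  have "openin X V" using assms(1,2) unfolding is_base_def by simp
  hence "openin X (V - X closure_of U)" by (simp add: openin_diff)
  then obtain S where S: "S \<subseteq> B" "\<Union>S = V - X closure_of U"
    using assms(1) unfolding is_base_def by meson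
  have "V - X closure_of U \<noteq> {}" using assms(3) by simp
  then obtain W where W: "W \<in> S" "W \<noteq> {}" using S(2) by auto
  have "W \<subseteq> V - X closure_of U" using Union_upper[OF W(1)] S(2) by simp
  thus ?thesis using W S(1) by auto
qed

lemma countable_subfams_I: "countable P \<Longrightarrow> P \<subseteq> Q \<Longrightarrow> P \<in> countable_subfams Q"
  unfolding countable_subfams_def by simp

lemma countable_subfams_D: "P \<in> countable_subfams Q \<Longrightarrow> countable P \<and> P \<subseteq> Q"
  unfolding countable_subfams_def by simp

theorem corollary2p8:
  fixes X :: "'a topology" and \<B> :: "'a set set"
  assumes "completely_regular_space X"
    and "\<B> \<subseteq> cozero_sets X"
    and "is_base X \<B>"
    and "\<exists>C. is_club \<B> C \<and> C \<subseteq> {P \<in> countable_subfams \<B>. subfam_excl X P \<B>}"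
  shows "\<exists>C. is_club (cozero_sets X) C \<and>
           C \<subseteq> {P \<in> countable_subfams (cozero_sets X). subfam_excl X P (cozero_sets X)}"
proof -
  obtain C where CC: "is_club \<B> C \<and> C \<subseteq> {P \<in> countable_subfams \<B>. subfam_excl X P \<B>}"
    using assms(4) ..
  have Cc: "is_club \<B> C" using CC by (rule conjunct1)
  have CE: "\<And>D. D \<in> C \<Longrightarrow> subfam_excl X D \<B>" using CC by auto
  define \<Sigma> where "\<Sigma> = cozero_sets X"
  have BS: "\<B> \<subseteq> \<Sigma>" unfolding \<Sigma>_def by (rule assms(2))
  have So: "\<forall>U\<in>\<Sigma>. openin X U" unfolding \<Sigma>_def using cozero_open by auto
  define wit where "wit = (\<lambda>(U::'a set) (V::'a set). if \<not> V \<subseteq> X closure_of U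
      then (SOME W. W \<in> \<B> \<and> W \<noteq> {} \<and> W \<subseteq> V - X closure_of U) else V)"
  have witB: "wit U V \<in> \<B>" if V: "V \<in> \<B>" for U V
  proof (cases "V \<subseteq> X closure_of U")
    case True thus ?thesis using V unfolding wit_def by simp
  next
    case False
    have "\<exists>W. W \<in> \<B> \<and> W \<noteq> {} \<and> W \<subseteq> V - X closure_of U"
      using base_wit[OF assms(3) V False] .
    from someI_ex[OF this] show ?thesis using False unfolding wit_def by simp
  qed
  have witP: "wit U V \<noteq> {} \<and> wit U V \<subseteq> V - X closure_of U"
    if V: "V \<in> \<B>" and nv: "\<not> V \<subseteq> X closure_of U" for U V
  proof -
    have "\<exists>W. W \<in> \<B> \<and> W \<noteq> {} \<and> W \<subseteq> V - X closure_of U"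
      using base_wit[OF assms(3) V nv] .
    from someI_ex[OF this] show ?thesis using nv unfolding wit_def by simp
  qed
  define cf where "cf = (\<lambda>Q. SOME D. D \<in> C \<and> Q \<inter> \<B> \<subseteq> D)"
  have cfP: "cf Q \<in> C \<and> Q \<inter> \<B> \<subseteq> cf Q" if "countable Q" for Q
  proof -
    have "Q \<inter> \<B> \<in> countable_subfams \<B>"
      by (rule countable_subfams_I) (use that in auto)
    then have "\<exists>D\<in>C. Q \<inter> \<B> \<subseteq> D" by (rule club_D3[OF Cc])
    then have "\<exists>D. D \<in> C \<and> Q \<inter> \<B> \<subseteq> D" by auto
    thus ?thesis unfolding cf_def by (rule someI_ex)
  qed
  have cfB: "cf Q \<subseteq> \<B> \<and> countable (cf Q)" if "countable Q" for Q
  proof -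
    have "cf Q \<in> countable_subfams \<B>" using cfP[OF that] club_D1[OF Cc] by auto
    thus ?thesis using countable_subfams_D by auto
  qed
  define step where "step = (\<lambda>Q. Q \<union> cf Q \<union> (case_prod wit) ` (Q \<times> (Q \<inter> \<B>)))"
  define good where "good = (\<lambda>P. \<forall>U\<in>P. \<forall>V\<in>P \<inter> \<B>. \<not> V \<subseteq> X closure_of U \<longrightarrow>
        (\<exists>W\<in>P \<inter> \<B>. W \<noteq> {} \<and> W \<subseteq> V - X closure_of U))"
  define C' where "C' = {P \<in> countable_subfams \<Sigma>. P \<inter> \<B> \<in> C \<and> good P}"
  have target: "C' \<subseteq> {P \<in> countable_subfams \<Sigma>. subfam_excl X P \<Sigma>}"
  proof
    fix P assume P: "P \<in> C'"
    have P1: "P \<in> countable_subfams \<Sigma>" and P2: "P \<inter> \<B> \<in> C" and P3: "good P"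
      using P unfolding C'_def by auto
    have "P \<subseteq> \<Sigma>" using countable_subfams_D[OF P1] by simp
    have "subfam_excl X P \<Sigma>"
    proof (rule excl_main[OF CE[OF P2]])
      show "P \<inter> \<B> \<subseteq> P" by simp
      show "P \<subseteq> \<Sigma>" by fact
      show "\<forall>U\<in>\<Sigma>. openin X U" by (rule So)
      show "\<forall>U\<in>P. \<forall>V\<in>P \<inter> \<B>. \<not> V \<subseteq> X closure_of U \<longrightarrow>
          (\<exists>W\<in>P \<inter> \<B>. W \<noteq> {} \<and> W \<subseteq> V - X closure_of U)" using P3 unfolding good_def .
    qed
    thus "P \<in> {P \<in> countable_subfams \<Sigma>. subfam_excl X P \<Sigma>}" using P1 by simp
  qed
  have goodU: "good (\<Union>n. F n)" if inc: "incseq F" and g: "\<And>n. good (F n)" for F :: "nat \<Rightarrow> 'a set set"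
    unfolding good_def
  proof (intro ballI impI)
    fix U V assume U: "U \<in> (\<Union>n. F n)" and V: "V \<in> (\<Union>n. F n) \<inter> \<B>"
      and nv: "\<not> V \<subseteq> X closure_of U"
    obtain n where n: "U \<in> F n" using U by auto
    obtain m where m: "V \<in> F m" and VB: "V \<in> \<B>" using V by auto
    have "F n \<subseteq> F (max n m)" "F m \<subseteq> F (max n m)"
      using inc by (simp_all add: incseqD)
    hence U': "U \<in> F (max n m)" and V': "V \<in> F (max n m) \<inter> \<B>" using n m VB by auto
    have "\<exists>W\<in>F (max n m) \<inter> \<B>. W \<noteq> {} \<and> W \<subseteq> V - X closure_of U"
      using g[of "max n m", unfolded good_def, rule_format, OF U' V' nv] .
    then obtain W where "W \<in> F (max n m) \<inter> \<B>" "W \<noteq> {}" "W \<subseteq> V - X closure_of U" by blast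
    thus "\<exists>W\<in>(\<Union>n. F n) \<inter> \<B>. W \<noteq> {} \<and> W \<subseteq> V - X closure_of U" by blast
  qed
  have club: "is_club \<Sigma> C'"
    unfolding is_club_def
  proof (intro conjI allI impI ballI)
    show "C' \<subseteq> countable_subfams \<Sigma>" unfolding C'_def by auto
  next
    fix F :: "nat \<Rightarrow> 'a set set"
    assume A: "(\<forall>n. F n \<in> C') \<and> incseq F"
    hence Fn: "\<And>n. F n \<in> C'" and inc: "incseq F" by auto
    have Fc: "countable (F n) \<and> F n \<subseteq> \<Sigma>" for n
      using Fn[of n] countable_subfams_D unfolding C'_def by auto
    have "(\<Union>n. F n) \<in> countable_subfams \<Sigma>"
      by (rule countable_subfams_I) (use Fc in auto)
    moreover have "(\<Union>n. F n) \<inter> \<B> \<in> C"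
    proof -
      have e: "(\<Union>n. F n) \<inter> \<B> = (\<Union>n. F n \<inter> \<B>)" by auto
      have i: "incseq (\<lambda>n. F n \<inter> \<B>)"
        using inc unfolding incseq_def by auto
      have c: "\<And>n. F n \<inter> \<B> \<in> C" using Fn unfolding C'_def by auto
      show ?thesis unfolding e by (rule club_D2[OF Cc c i])
    qed
    moreover have "good (\<Union>n. F n)"
      by (rule goodU[OF inc]) (use Fn in \<open>auto simp: C'_def\<close>)
    ultimately show "(\<Union>n. F n) \<in> C'" unfolding C'_def by auto
  next
    fix A assume A: "A \<in> countable_subfams \<Sigma>"
    define s where "s = (\<lambda>n. (step ^^ n) A)"
    have s0: "s 0 = A" and sS: "\<And>n. s (Suc n) = step (s n)" unfolding s_def by auto
    have sc: "countable (s n) \<and> s n \<subseteq> \<Sigma>" for n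
    proof (induction n)
      case 0 thus ?case using countable_subfams_D[OF A] s0 by auto
    next
      case (Suc n)
      have c1: "countable (case_prod wit ` (s n \<times> (s n \<inter> \<B>)))"
        using Suc by (intro countable_image countable_SIGMA) auto
      have c2: "case_prod wit ` (s n \<times> (s n \<inter> \<B>)) \<subseteq> \<Sigma>" using witB BS by auto
      have c3: "cf (s n) \<subseteq> \<Sigma> \<and> countable (cf (s n))" using cfB[of "s n"] Suc BS by auto
      show ?case unfolding sS step_def using c1 c2 c3 Suc by auto
    qed
    have inc: "incseq s" unfolding incseq_Suc_iff sS step_def by auto
    define P where "P = (\<Union>n. s n)"
    have "P \<in> countable_subfams \<Sigma>"
      unfolding P_def by (rule countable_subfams_I) (use sc in auto)
    moreover have "P \<inter> \<B> \<in> C"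
    proof -
      have cfs1: "cf (s n) \<in> C" and cfs2: "s n \<inter> \<B> \<subseteq> cf (s n)" for n
        using cfP[of "s n"] sc[of n] by auto
      have cfs3: "cf (s n) \<subseteq> s (Suc n) \<inter> \<B>" for n
        using cfB[of "s n"] sc[of n] unfolding sS step_def by auto
      have i: "incseq (\<lambda>n. cf (s n))" unfolding incseq_Suc_iff
      proof
        fix n show "cf (s n) \<subseteq> cf (s (Suc n))" using cfs3[of n] cfs2[of "Suc n"] by auto
      qed
      have e: "P \<inter> \<B> = (\<Union>n. cf (s n))"
      proof
        show "P \<inter> \<B> \<subseteq> (\<Union>n. cf (s n))" unfolding P_def using cfs2 by auto
        show "(\<Union>n. cf (s n)) \<subseteq> P \<inter> \<B>" unfolding P_def using cfs3 by auto
      qed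
      show ?thesis unfolding e by (rule club_D2[OF Cc cfs1 i])
    qed
    moreover have "good P"
      unfolding good_def
    proof (intro ballI impI)
      fix U V assume U: "U \<in> P" and V: "V \<in> P \<inter> \<B>" and nv: "\<not> V \<subseteq> X closure_of U"
      obtain n where n: "U \<in> s n" using U unfolding P_def by auto
      obtain m where m: "V \<in> s m" and VB: "V \<in> \<B>" using V unfolding P_def by auto
      have "s n \<subseteq> s (max n m)" "s m \<subseteq> s (max n m)"
        using inc by (simp_all add: incseqD)
      hence U': "U \<in> s (max n m)" and V': "V \<in> s (max n m) \<inter> \<B>" using n m VB by auto
      have "(U, V) \<in> s (max n m) \<times> (s (max n m) \<inter> \<B>)" using U' V' by simp
      hence "wit U V \<in> (case_prod wit) ` (s (max n m) \<times> (s (max n m) \<inter> \<B>))"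
        by (rule rev_image_eqI) simp
      hence "wit U V \<in> s (Suc (max n m))" unfolding sS step_def by simp
      moreover have "wit U V \<in> \<B>" using witB[OF VB] .
      moreover have "wit U V \<noteq> {} \<and> wit U V \<subseteq> V - X closure_of U" using witP[OF VB nv] .
      ultimately show "\<exists>W\<in>P \<inter> \<B>. W \<noteq> {} \<and> W \<subseteq> V - X closure_of U"
        unfolding P_def by blast
    qed
    ultimately have "P \<in> C'" unfolding C'_def by auto
    moreover have "A \<subseteq> P" unfolding P_def using s0 by auto
    ultimately show "\<exists>D\<in>C'. A \<subseteq> D" by auto
  qed
  show ?thesis using club target unfolding \<Sigma>_def by (intro exI[of _ C'] conjI)
qed

end
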